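(* Suppose the Hasse diagram $\Gamma$ of $\rho$ consists of vertices $1,\dots,m+p$ ($m\ge3$, $p\ge1$) and exactly two paths from vertex $1$ to vertex $m$: $a_1\cdots a_{m-1}$ through vertices $1,2,\dots,m-1,m$, and $b_1\cdots b_{p+1}$ through vertices $1,m+p,\dots,m+1,m$ (internally disjoint), and no other arrows. Then for every group $G$, every transitive function $u:\rho\to G$ is trivial.
   Context: $\rho$ is a preorder on a finite set; $\mathcal C$ the poset of its equivalence classes ($i\sim j$ iff $i\rho j$ and $j\rho i$; $\hat i\le\hat j$ iff $i\rho j$). $\Gamma$ is the directed graph with vertex set $\mathcal C$ and an arrow from $\alpha$ to $\beta$ iff $\alpha<\beta$ with nothing strictly between. A transitive function on $\rho$ with values in $G$ is $u:\rho\to G$ with $u(i,j)u(j,r)=u(i,r)$ whenever $i\rho j$, $j\rho r$; it is trivial if there are $g_i\in G$ with $u(i,j)=g_ig_j^{-1}$ for all $i\rho j$. *)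

theory Defs
  imports Main
begin

definition pclasses :: "'a set \<Rightarrow> 'a rel \<Rightarrow> 'a set set" where
  "pclasses I \<rho> = I // (\<rho> \<inter> \<rho>\<inverse>)"

definition cls_le :: "'a rel \<Rightarrow> 'a set \<Rightarrow> 'a set \<Rightarrow> bool" where
  "cls_le \<rho> \<alpha> \<beta> \<longleftrightarrow> (\<exists>i\<in>\<alpha>. \<exists>j\<in>\<beta>. (i, j) \<in> \<rho>)"

definition cls_less :: "'a rel \<Rightarrow> 'a set \<Rightarrow> 'a set \<Rightarrow> bool" where
  "cls_less \<rho> \<alpha> \<beta> \<longleftrightarrow> cls_le \<rho> \<alpha> \<beta> \<and> \<alpha> \<noteq> \<beta>"

definition hasse_arrow :: "'a set \<Rightarrow> 'a rel \<Rightarrow> 'a set \<Rightarrow> 'a set \<Rightarrow> bool" where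
  "hasse_arrow I \<rho> \<alpha> \<beta> \<longleftrightarrow>
     \<alpha> \<in> pclasses I \<rho> \<and> \<beta> \<in> pclasses I \<rho> \<and> cls_less \<rho> \<alpha> \<beta> \<and>
     \<not> (\<exists>\<gamma>\<in>pclasses I \<rho>. cls_less \<rho> \<alpha> \<gamma> \<and> cls_less \<rho> \<gamma> \<beta>)"

text \<open>Transitive function on rho with values in a group (written additively, group_add is
  not assumed commutative): u(i,j) u(j,r) = u(i,r).\<close>
definition transitive_fun :: "'a rel \<Rightarrow> ('a \<Rightarrow> 'a \<Rightarrow> 'g::group_add) \<Rightarrow> bool" where
  "transitive_fun \<rho> u \<longleftrightarrow>
     (\<forall>i j r. (i, j) \<in> \<rho> \<longrightarrow> (j, r) \<in> \<rho> \<longrightarrow> u i j + u j r = u i r)"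

definition trivial_fun :: "'a rel \<Rightarrow> ('a \<Rightarrow> 'a \<Rightarrow> 'g::group_add) \<Rightarrow> bool" where
  "trivial_fun \<rho> u \<longleftrightarrow> (\<exists>g. \<forall>i j. (i, j) \<in> \<rho> \<longrightarrow> u i j = g i + - g j)"

definition two_path_edges :: "nat \<Rightarrow> nat \<Rightarrow> (nat \<times> nat) set" where
  "two_path_edges m p =
     {(k, k + 1) | k. 1 \<le> k \<and> k \<le> m - 1}
     \<union> {(1, m + p)}
     \<union> {(k + 1, k) | k. m \<le> k \<and> k \<le> m + p - 1}"

end

theory Submission
  imports Defs
begin

lemma cls_rel:
  assumes "preorder_on I \<rho>" "C \<in> pclasses I \<rho>" "x \<in> C" "y \<in> C"
  shows "(x, y) \<in> \<rho>"
proof -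
  from assms(2) obtain a where "a \<in> I" "C = (\<rho> \<inter> \<rho>\<inverse>) `` {a}"
    unfolding pclasses_def quotient_def by blast
  with assms(3,4) have "(x,a) \<in> \<rho>" "(a,y) \<in> \<rho>" by auto
  moreover have "trans \<rho>" using assms(1) unfolding preorder_on_def by blast
  ultimately show ?thesis by (meson transD)
qed

lemma cls_nonempty:
  assumes "preorder_on I \<rho>" "C \<in> pclasses I \<rho>"
  shows "\<exists>x. x \<in> C"
proof -
  from assms(2) obtain a where "a \<in> I" "C = (\<rho> \<inter> \<rho>\<inverse>) `` {a}"
    unfolding pclasses_def quotient_def by blast
  moreover have "(a,a) \<in> \<rho>" using assms(1) \<open>a \<in> I\<close> unfolding preorder_on_def refl_on_def by blast
  ultimately show ?thesis by blast
qed

lemma cls_cover: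
  assumes "preorder_on I \<rho>" "x \<in> I"
  shows "\<exists>C\<in>pclasses I \<rho>. x \<in> C"
proof -
  have "(x,x) \<in> \<rho>" using assms(1) \<open>x \<in> I\<close> unfolding preorder_on_def refl_on_def by blast
  then have "x \<in> (\<rho> \<inter> \<rho>\<inverse>) `` {x}" by simp
  moreover have "(\<rho> \<inter> \<rho>\<inverse>) `` {x} \<in> pclasses I \<rho>"
    unfolding pclasses_def by (rule quotientI[OF assms(2)])
  ultimately show ?thesis by (rule bexI)
qed

lemma step:
  assumes "preorder_on I \<rho>" "\<alpha> \<in> pclasses I \<rho>" "\<beta> \<in> pclasses I \<rho>"
    "\<forall>x\<in>A. \<forall>y\<in>\<alpha>. (x,y) \<in> \<rho>" "cls_le \<rho> \<alpha> \<beta>"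
  shows "\<forall>x\<in>A. \<forall>y\<in>\<beta>. (x,y) \<in> \<rho>"
proof (intro ballI)
  fix x y assume "x \<in> A" "y \<in> \<beta>"
  from assms(5) obtain i j where "i \<in> \<alpha>" "j \<in> \<beta>" "(i,j) \<in> \<rho>" unfolding cls_le_def by blast
  have "(x,i) \<in> \<rho>" using assms(4) \<open>x \<in> A\<close> \<open>i \<in> \<alpha>\<close> by blast
  moreover have "(j,y) \<in> \<rho>" using cls_rel[OF assms(1,3) \<open>j \<in> \<beta>\<close> \<open>y \<in> \<beta>\<close>] .
  moreover have "trans \<rho>" using assms(1) unfolding preorder_on_def by blast
  ultimately show "(x,y) \<in> \<rho>" using \<open>(i,j) \<in> \<rho>\<close> by (meson transD)
qed

theorem mainTheorem13:
  fixes I :: "'a set" and \<rho> :: "'a rel" and m p :: nat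
    and \<phi> :: "nat \<Rightarrow> 'a set"
  assumes "finite I" and "preorder_on I \<rho>"
    and "m \<ge> 3" and "p \<ge> 1"
    and "bij_betw \<phi> {1..m + p} (pclasses I \<rho>)"
    and "\<forall>k\<in>{1..m + p}. \<forall>l\<in>{1..m + p}.
           hasse_arrow I \<rho> (\<phi> k) (\<phi> l) \<longleftrightarrow> (k, l) \<in> two_path_edges m p"
  shows "\<forall>u :: 'a \<Rightarrow> 'a \<Rightarrow> 'g::group_add. transitive_fun \<rho> u \<longrightarrow> trivial_fun \<rho> u"
proof -
  have pre: "preorder_on I \<rho>" by fact
  have inC: "\<And>k. k \<in> {1..m+p} \<Longrightarrow> \<phi> k \<in> pclasses I \<rho>"
    using assms(5) unfolding bij_betw_def by blast
  have edge: "\<And>k l. k \<in> {1..m+p} \<Longrightarrow> l \<in> {1..m+p} \<Longrightarrow> (k,l) \<in> two_path_edges m p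
      \<Longrightarrow> \<forall>x\<in>\<phi> 1. \<forall>y\<in>\<phi> k. (x,y) \<in> \<rho> \<Longrightarrow> \<forall>x\<in>\<phi> 1. \<forall>y\<in>\<phi> l. (x,y) \<in> \<rho>"
  proof -
    fix k l assume k: "k \<in> {1..m+p}" and l: "l \<in> {1..m+p}" and e: "(k,l) \<in> two_path_edges m p"
      and ih: "\<forall>x\<in>\<phi> 1. \<forall>y\<in>\<phi> k. (x,y) \<in> \<rho>"
    have "hasse_arrow I \<rho> (\<phi> k) (\<phi> l)" using assms(6) k l e by blast
    then have "cls_le \<rho> (\<phi> k) (\<phi> l)" unfolding hasse_arrow_def cls_less_def by blast
    then show "\<forall>x\<in>\<phi> 1. \<forall>y\<in>\<phi> l. (x,y) \<in> \<rho>" using step[OF pre inC[OF k] inC[OF l] ih] by blast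
  qed
  have base: "\<forall>x\<in>\<phi> 1. \<forall>y\<in>\<phi> 1. (x,y) \<in> \<rho>"
    using cls_rel[OF pre inC[of 1]] assms(3) by simp
  have A: "\<forall>x\<in>\<phi> 1. \<forall>y\<in>\<phi> (Suc j). (x,y) \<in> \<rho>" if "j < m" for j
    using that
  proof (induction j)
    case 0 then show ?case using base by simp
  next
    case (Suc j)
    have "(Suc j, Suc j + 1) \<in> two_path_edges m p"
      unfolding two_path_edges_def using Suc.prems by auto
    moreover have "\<forall>x\<in>\<phi> 1. \<forall>y\<in>\<phi> (Suc j). (x,y) \<in> \<rho>" using Suc by simp
    ultimately show ?case using edge[of "Suc j" "Suc (Suc j)"] Suc.prems by simp
  qed
  have e1: "(1, m+p) \<in> two_path_edges m p" unfolding two_path_edges_def by blast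
  have B0: "\<forall>x\<in>\<phi> 1. \<forall>y\<in>\<phi> (m+p). (x,y) \<in> \<rho>"
    by (rule edge[OF _ _ e1 base]) (use assms(3,4) in auto)
  have B: "\<forall>x\<in>\<phi> 1. \<forall>y\<in>\<phi> (m+p-j). (x,y) \<in> \<rho>" if "j < p" for j
    using that
  proof (induction j)
    case 0 then show ?case using B0 by simp
  next
    case (Suc j)
    have "(m+p-Suc j + 1, m+p-Suc j) \<in> two_path_edges m p"
      unfolding two_path_edges_def using Suc.prems by auto
    moreover have "m+p-Suc j + 1 = m+p-j" using Suc.prems by simp
    moreover have "\<forall>x\<in>\<phi> 1. \<forall>y\<in>\<phi> (m+p-j). (x,y) \<in> \<rho>" using Suc by simp
    ultimately show ?case using edge[of "m+p-j" "m+p-Suc j"] Suc.prems assms(3) by simp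
  qed
  have all: "\<forall>x\<in>\<phi> 1. \<forall>y\<in>\<phi> k. (x,y) \<in> \<rho>" if k: "k \<in> {1..m+p}" for k
  proof (cases "k \<le> m")
    case True
    then have "Suc (k-1) = k" "k - 1 < m" using k by auto
    then show ?thesis using A[of "k - 1"] by simp
  next
    case False
    then have "m+p-(m+p-k) = k" "m+p-k < p" using k by auto
    then show ?thesis using B[of "m+p-k"] by simp
  qed
  obtain i0 where i0: "i0 \<in> \<phi> 1" using cls_nonempty[OF pre inC[of 1]] assms(3) by auto
  have min: "\<forall>y\<in>I. (i0, y) \<in> \<rho>"
  proof
    fix y assume "y \<in> I"
    then obtain C where "C \<in> pclasses I \<rho>" "y \<in> C" using cls_cover[OF pre] by blast
    then obtain k where "k \<in> {1..m+p}" "C = \<phi> k" using assms(5) unfolding bij_betw_def by blast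
    then show "(i0,y) \<in> \<rho>" using all i0 \<open>y \<in> C\<close> by blast
  qed
  show ?thesis
  proof (intro allI impI)
    fix u :: "'a \<Rightarrow> 'a \<Rightarrow> 'g" assume tu: "transitive_fun \<rho> u"
    show "trivial_fun \<rho> u" unfolding trivial_fun_def
    proof (rule exI[of _ "\<lambda>i. - u i0 i"], intro allI impI)
      fix i j assume ij: "(i,j) \<in> \<rho>"
      then have "i \<in> I" using pre unfolding preorder_on_def by blast
      then have "(i0,i) \<in> \<rho>" using min by blast
      then have "u i0 i + u i j = u i0 j" using tu ij unfolding transitive_fun_def by blast
      then have "u i j = - u i0 i + u i0 j" by (metis add.assoc add.left_inverse add_0)
      then show "u i j = - u i0 i + - (- u i0 j)" by simp
    qed
  qed
qed

end
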